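(* Let $0<\epsilon<1$ be fixed. Suppose that Assumption 2 holds and that at least one of Assumption 1.1 and Assumption 1.2 holds. Suppose moreover that for every $C\subseteq V$ with $|C|=r$, \[ \max_{\emptyset\ne D\subseteq C}\frac{\mathbb{E}_0[e(D)]\,h(\rho_C-1)}{|D|\log(n/|D|)}\le1-\epsilon . \] Then the following hold as $n\to\infty$: (a) for all $C\subseteq V$ with $|C|=r$ and all $D\in\mathcal E_C$, \[ \frac{\log(r/|D|)}{\log(n/r)}\big(\log(\rho_C)\vee1\big)=o(1); \] (b) $\log(n/r)/\log(\rho_C)\to\infty$ for all $C\subseteq V$ with $|C|=r$.
   Context: Setting. For each $n$ let $V=\{1,\dots,n\}$, let $p_{ij}=p_{ji}\in[0,1]$ ($i\ne j$) be edge probabilities, let $r=r_n$ be a community size, and for every $C\subseteq V$ with $|C|=r$ let $\rho_C>1$ with $\rho_Cp_{ij}\le1$ for $i,j\in C$. All may depend on $n$, and limits are as $n\to\infty$. Under $\mathbb{P}_0$ the adjacency entries $A_{ij}$ ($i<j$) of a random simple graph on $V$ are independent $\mathrm{Bern}(p_{ij})$, with expectation $\mathbb{E}_0$. Notation. $e(D)=\sum_{i<j,\ i,j\in D}A_{ij}$. $h(x)=(x+1)\log(x+1)-x$. For $|D|\ge2$, $\bar p_D=\mathbb{E}_0[e(D)]/\binom{|D|}2$. With $b_n=\log\log(n/r)$, for $C$ with $|C|=r$ define \[ \mathcal E_C=\Big\{D\subseteq C:\ (\rho_C-1)^2\,\mathbb{E}_0[e(D)]>(1-\epsilon/2)\,|D|\Big(\log\frac{n|D|}{r^2}-b_n\Big)\Big\}.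 \] Assumption 1.1. There exists $\delta\in(0,1/2)$ with: (i) $r=O(n^{1/2-\delta})$; (ii) there exists $0<\gamma_n=o(1)$ such that $\max_{|C|=r}\max_{D\subseteq C,\,|D|<r/(n/r)^{\gamma_n}}\frac{|D|\bar p_D}{|C|\bar p_C}\le\delta$; (iii) $\max_{|C|=r}1/\bar p_C=o(r/\log(n/r))$. Assumption 1.2. (i) $r=n^{o(1)}$; (ii) $\max_{|C|=r}\log(1/\bar p_C)=o(\log(n/r)/\log r)$. Assumption 2. $\max_{|C|=r}\max_{i,j\in C}\rho_C^2p_{ij}\to0$. *)

theory Defs
  imports Complex_Main "HOL-Library.Landau_Symbols"
begin

(* Model: p n i j = p_ij for the n-th graph, r n = r_n, rho n C = rho_C.
   Vertex set V = {1..n}. All logarithms are natural logarithms. *)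

definition Ee :: "(nat \<Rightarrow> nat \<Rightarrow> nat \<Rightarrow> real) \<Rightarrow> nat \<Rightarrow> nat set \<Rightarrow> real" where
  "Ee p n D = (\<Sum>(i,j)\<in>{(i,j). i \<in> D \<and> j \<in> D \<and> i < j}. p n i j)"

definition pbar :: "(nat \<Rightarrow> nat \<Rightarrow> nat \<Rightarrow> real) \<Rightarrow> nat \<Rightarrow> nat set \<Rightarrow> real" where
  "pbar p n D = Ee p n D / real (card D choose 2)"

definition hfun :: "real \<Rightarrow> real" where
  "hfun x = (x + 1) * ln (x + 1) - x"

definition bn :: "(nat \<Rightarrow> nat) \<Rightarrow> nat \<Rightarrow> real" where
  "bn r n = ln (ln (real n / real (r n)))"

definition ECset :: "real \<Rightarrow> (nat \<Rightarrow> nat \<Rightarrow> nat \<Rightarrow> real) \<Rightarrow> (nat \<Rightarrow> nat)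
      \<Rightarrow> (nat \<Rightarrow> nat set \<Rightarrow> real) \<Rightarrow> nat \<Rightarrow> nat set \<Rightarrow> nat set set" where
  "ECset \<epsilon> p r rho n C = {D. D \<subseteq> C \<and>
      (rho n C - 1)^2 * Ee p n D >
      (1 - \<epsilon>/2) * real (card D) *
        (ln (real n * real (card D) / (real (r n))^2) - bn r n)}"

definition setting :: "(nat \<Rightarrow> nat \<Rightarrow> nat \<Rightarrow> real) \<Rightarrow> (nat \<Rightarrow> nat)
      \<Rightarrow> (nat \<Rightarrow> nat set \<Rightarrow> real) \<Rightarrow> nat \<Rightarrow> bool" where
  "setting p r rho n \<longleftrightarrow>
     (\<forall>i\<in>{1..n}. \<forall>j\<in>{1..n}. i \<noteq> j \<longrightarrow>
         p n i j = p n j i \<and> 0 \<le> p n i j \<and> p n i j \<le> 1) \<and>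
     (\<forall>C. C \<subseteq> {1..n} \<and> card C = r n \<longrightarrow>
         rho n C > 1 \<and> (\<forall>i\<in>C. \<forall>j\<in>C. i \<noteq> j \<longrightarrow> rho n C * p n i j \<le> 1))"

definition assumption11 :: "(nat \<Rightarrow> nat \<Rightarrow> nat \<Rightarrow> real) \<Rightarrow> (nat \<Rightarrow> nat) \<Rightarrow> bool" where
  "assumption11 p r \<longleftrightarrow> (\<exists>\<delta>::real. 0 < \<delta> \<and> \<delta> < 1/2 \<and>
     \<comment> \<open>(i)\<close>
     (\<lambda>n. real (r n)) \<in> O(\<lambda>n. real n powr (1/2 - \<delta>)) \<and>
     \<comment> \<open>(ii)\<close>
     (\<exists>\<gamma>::nat \<Rightarrow> real. (\<forall>n. 0 < \<gamma> n) \<and> \<gamma> \<longlonglongrightarrow> 0 \<and>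
        (\<forall>n. \<forall>C D. C \<subseteq> {1..n} \<and> card C = r n \<and> D \<subseteq> C \<and>
            real (card D) < real (r n) / (real n / real (r n)) powr (\<gamma> n) \<longrightarrow>
            real (card D) * pbar p n D / (real (card C) * pbar p n C) \<le> \<delta>)) \<and>
     \<comment> \<open>(iii): max_C 1/pbar_C = o(r / log(n/r)), with pbar_C > 0 (so 1/pbar_C is finite)\<close>
     (\<forall>c>0. eventually (\<lambda>n. \<forall>C. C \<subseteq> {1..n} \<and> card C = r n \<longrightarrow>
          pbar p n C > 0 \<and>
          (1 / pbar p n C) * ln (real n / real (r n)) \<le> c * real (r n)) sequentially))"

definition assumption12 :: "(nat \<Rightarrow> nat \<Rightarrow> nat \<Rightarrow> real) \<Rightarrow> (nat \<Rightarrow> nat) \<Rightarrow> bool" where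
  "assumption12 p r \<longleftrightarrow>
     \<comment> \<open>(i) r = n^{o(1)}\<close>
     (\<forall>c>0. eventually (\<lambda>n. real (r n) \<le> real n powr c) sequentially) \<and>
     \<comment> \<open>(ii) max_C log(1/pbar_C) = o(log(n/r)/log r), with pbar_C > 0\<close>
     (\<forall>c>0. eventually (\<lambda>n. \<forall>C. C \<subseteq> {1..n} \<and> card C = r n \<longrightarrow>
          pbar p n C > 0 \<and>
          ln (1 / pbar p n C) * ln (real (r n)) \<le> c * ln (real n / real (r n))) sequentially)"

definition assumption2 :: "(nat \<Rightarrow> nat \<Rightarrow> nat \<Rightarrow> real) \<Rightarrow> (nat \<Rightarrow> nat)
      \<Rightarrow> (nat \<Rightarrow> nat set \<Rightarrow> real) \<Rightarrow> bool" where
  "assumption2 p r rho \<longleftrightarrow>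
     (\<forall>c>0. eventually (\<lambda>n. \<forall>C. C \<subseteq> {1..n} \<and> card C = r n \<longrightarrow>
          (\<forall>i\<in>C. \<forall>j\<in>C. i \<noteq> j \<longrightarrow> (rho n C)^2 * p n i j \<le> c)) sequentially)"

end

theory Submission
  imports Defs "HOL-Real_Asymp.Real_Asymp"
begin


lemma choose2_real: "real (k choose 2) = real k * (real k - 1) / 2"
proof (cases k)
  case 0 then show ?thesis by simp
next
  case (Suc m)
  have "even (k * (k - 1))" by (cases "even k") auto
  then show ?thesis using Suc by (simp add: choose_two real_of_nat_div of_nat_diff algebra_simps)
qed

lemma ln_lower: assumes "0 \<le> (t::real)" shows "2 * t / (2 + t) \<le> ln (1 + t)"
proof -
  define f where "f = (\<lambda>x::real. ln (1 + x) - 2 * x / (2 + x))"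
  have d: "(f has_real_derivative (1/(1+x) - 4/(2+x)^2)) (at x)" if "0 \<le> x" for x
    unfolding f_def using that
    by (auto intro!: derivative_eq_intros simp: field_simps power2_eq_square)
  have "f 0 \<le> f t"
  proof (rule DERIV_nonneg_imp_nondecreasing[OF assms])
    fix x assume x: "0 \<le> x" "x \<le> t"
    show "\<exists>y. (f has_real_derivative y) (at x) \<and> 0 \<le> y"
    proof (intro exI conjI)
      show "(f has_real_derivative (1/(1+x) - 4/(2+x)^2)) (at x)" using d x by simp
      have "4 * (1+x) \<le> (2+x)^2" by (simp add: power2_eq_square algebra_simps)
      then show "0 \<le> 1/(1+x) - 4/(2+x)^2" using x by (simp add: field_simps)
    qed
  qed
  then show ?thesis by (simp add: f_def)
qed

lemma hfun_lower: assumes "0 \<le> (t::real)" shows "t^2 \<le> (2 + t) * hfun t"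
proof -
  have "2 * t / (2 + t) \<le> ln (1 + t)" by (rule ln_lower[OF assms])
  then have "2 * t \<le> (2 + t) * ln (1 + t)" using assms by (simp add: field_simps)
  then have "2 * t * (1 + t) \<le> (2 + t) * ln (1 + t) * (1 + t)" using assms
    by (intro mult_right_mono) auto
  then show ?thesis unfolding hfun_def by (simp add: algebra_simps power2_eq_square)
qed

lemma t1: "((\<lambda>n::nat. ln (ln (real n)) / ln (real n)) \<longlongrightarrow> 0) sequentially"
  by real_asymp

lemma t2: "((\<lambda>y::real. (ln (8*y))^2 / y) \<longlongrightarrow> 0) at_top"
  by real_asymp



lemma h_le_4c:
  fixes h pb r L c e :: real
  assumes "0 < pb" "2 \<le> r" "h * (pb * (r*(r-1)/2)) \<le> (1-e) * (r * L)"
    "1/pb * L \<le> c * r" "0<e" "e<1" "0 \<le> L"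
  shows "h \<le> 4*c"
proof -
  have "0 \<le> e * (r * L)" using assms by simp
  then have "(1-e) * (r * L) \<le> r * L" by (simp add: algebra_simps)
  then have "h * (pb * (r*(r-1)/2)) \<le> r * L" using assms(3) by linarith
  also have "r * L \<le> r * (c * r * pb)" using assms(1,2,4) by (intro mult_left_mono) (auto simp: field_simps)
  finally have "(h * (r-1)/2) * (pb * r) \<le> (c * r) * (pb * r)" by (simp add: algebra_simps)
  then have 1: "h * (r-1)/2 \<le> c * r" using assms(1,2) by (simp add: mult_le_cancel_right)
  have "0 \<le> 1/pb * L" using assms by simp
  then have "0 \<le> c * r" using assms(4) by linarith
  then have c0: "0 \<le> c" using assms(2) by (simp add: zero_le_mult_iff)
  show ?thesis
  proof (cases "h \<le> 0")
    case True then show ?thesis using c0 by simp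
  next
    case False
    then have "h * r / 4 \<le> h * (r-1)/2" using assms(2) by (simp add: field_simps)
    with 1 have "h * r \<le> 4 * c * r" by simp
    then show ?thesis using assms(2) by (simp add: mult_le_cancel_right)
  qed
qed

lemma t_small:
  fixes t t0 :: real
  assumes "0 \<le> t" "t\<^sup>2 \<le> (2+t) * h" "h \<le> t0^2/3" "0 < t0" "t0 < 1"
  shows "t < t0"
proof (rule ccontr)
  assume "\<not> t < t0"
  then have tt: "t0 \<le> t" by simp
  have "(2+t) * h \<le> (2+t) * (t0^2/3)" using assms by (intro mult_left_mono) auto
  then have "t^2 \<le> (2+t) * (t0^2/3)" using assms by linarith
  moreover have "t * t0 \<le> t^2" using tt assms by (simp add: power2_eq_square mult_left_mono)
  moreover have "(2+t) * (t0^2/3) < t * t0"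
  proof -
    have "t * t0 < t * 1" using tt assms by (intro mult_strict_left_mono) auto
    then have "(2+t) * t0 < 3 * t" using tt by (simp add: algebra_simps)
    then have "(2+t) * t0 * t0 < 3 * t * t0" using assms by simp
    then show ?thesis by (simp add: power2_eq_square field_simps)
  qed
  ultimately show False by simp
qed

lemma EeD_le:
  fixes dD r pbD pbC d :: real
  assumes "dD * pbD \<le> d * r * pbC" "1 \<le> dD" "dD \<le> r" "0 \<le> d" "0 < pbC"
  shows "pbD * (dD * (dD - 1) / 2) \<le> d * dD / r * (pbC * (r * (r-1)/2))"
proof -
  have "pbD * (dD * (dD - 1) / 2) = (dD * pbD) * ((dD - 1)/2)" by simp
  also have "\<dots> \<le> (d * r * pbC) * ((dD - 1)/2)" using assms by (intro mult_right_mono) auto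
  also have "\<dots> = d * pbC / 2 * (r * (dD - 1))" by simp
  also have "\<dots> \<le> d * pbC / 2 * (dD * (r - 1))" using assms by (intro mult_left_mono) (auto simp: algebra_simps)
  also have "\<dots> = d * dD / r * (pbC * (r * (r-1)/2))" using assms by (simp add: field_simps)
  finally show ?thesis .
qed

lemma arith11:
  fixes e d t l lr L lK :: real
  assumes "0<e" "e<1" "0<d" "d<1/2" "0 \<le> t" "t \<le> e/2" "0 \<le> lr" "L = l - lr"
    "lr \<le> lK + (1/2-d)*l" "B \<le> d*e/4*l" "2*lK \<le> d*e/4*l" "0 \<le> l" "0 \<le> L"
    "(1-e/2)*(l - 2*lr - B) < (2+t)*d*(1-e)*L"
  shows False
proof -
  have "2*d*l - d*e/2*l \<le> l - 2*lr - B" using assms by (simp add: algebra_simps)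
  then have 1: "(1-e/2)*(2*d*l - d*e/2*l) \<le> (1-e/2)*(l - 2*lr - B)" using assms by (intro mult_left_mono) auto
  have "L \<le> l" using assms by simp
  have 2: "(2+t)*d*(1-e)*L \<le> (2+e/2)*d*(1-e)*l"
    using assms \<open>L \<le> l\<close> by (intro mult_mono) auto
  have 3: "(2+e/2)*d*(1-e)*l \<le> (1-e/2)*(2*d*l - d*e/2*l)"
  proof -
    have "(2+e/2)*(1-e) \<le> (1-e/2)*(2 - e/2)" by (simp add: algebra_simps power2_eq_square)
    then have "(2+e/2)*(1-e) * (d*l) \<le> (1-e/2)*(2 - e/2) * (d*l)" using assms by (intro mult_right_mono) auto
    moreover have eq1: "(2+e/2)*d*(1-e)*l = (2+e/2)*(1-e) * (d*l)" by (simp add: algebra_simps)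
    moreover have eq2: "(1-e/2)*(2*d*l - d*e/2*l) = (1-e/2)*(2 - e/2) * (d*l)" by (simp add: field_simps)
    ultimately show ?thesis by (simp only: eq1 eq2)
  qed
  show False using 1 2 3 assms(14) by linarith
qed

lemma arith12a:
  fixes lr lrho lp L e c :: real
  assumes "lrho \<le> ln 8 + ln L - lp - lr" "- lp * lr \<le> c * L" "0 \<le> lr" "0 < L"
  shows "lr * lrho \<le> (ln (8*L))^2/4 + c * L"
proof -
  have "lr * lrho \<le> lr * (ln (8*L) - lr) + (- lp * lr)"
    using mult_left_mono[OF assms(1) assms(3)] assms(4) by (simp add: ln_mult algebra_simps)
  also have "lr * (ln (8*L) - lr) \<le> (ln (8*L))^2/4"
  proof -
    have "0 \<le> (ln (8*L) - 2*lr)^2" by simp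
    then show ?thesis by (simp add: power2_eq_square algebra_simps)
  qed
  finally show ?thesis using assms by linarith
qed




lemma Ee_empty: "Ee p n {} = 0" by (simp add: Ee_def)

lemma Ee_eq: assumes "finite D" shows "Ee p n D = pbar p n D * real (card D choose 2)"
proof (cases "card D choose 2 = 0")
  case True
  then have c: "card D < 2" by (simp add: binomial_eq_0_iff)
  have e: "{(i,j). i \<in> D \<and> j \<in> D \<and> i < j} = {}"
  proof (rule ccontr)
    assume "{(i,j). i \<in> D \<and> j \<in> D \<and> i < j} \<noteq> {}"
    then obtain i j where "i \<in> D" "j \<in> D" "i < j" by auto
    then have "{i,j} \<subseteq> D" "card {i,j} = 2" by auto
    then have "2 \<le> card D" using assms card_mono by metis
    with c show False by simp
  qed
  have "Ee p n D = 0" unfolding Ee_def e by simp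
  then show ?thesis using True by simp
next
  case False
  then show ?thesis by (simp add: pbar_def)
qed

lemma card_ge2:
  assumes "0 < pbar p n C" shows "2 \<le> card C"
proof (rule ccontr)
  assume "\<not> 2 \<le> card C"
  then have "card C choose 2 = 0" by simp
  then have "pbar p n C = 0" by (simp only: pbar_def of_nat_0 div_by_0)
  then show False using assms by simp
qed

lemma EeC_eq:
  assumes "finite C" shows "Ee p n C = pbar p n C * (real (card C) * (real (card C) - 1) / 2)"
  using Ee_eq[OF assms] choose2_real by simp

lemma ECsetD:
  assumes "D \<in> ECset \<epsilon> p r rho n C"
  shows "D \<subseteq> C" "(rho n C - 1)^2 * Ee p n D >
      (1 - \<epsilon>/2) * real (card D) *
        (ln (real n * real (card D) / (real (r n))^2) - bn r n)"
  using assms unfolding ECset_def by auto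

lemma ECset_ne:
  assumes "D \<in> ECset \<epsilon> p r rho n C" shows "D \<noteq> {}"
  using ECsetD[OF assms] by (auto simp: Ee_empty)

lemma key11:
  fixes \<epsilon> \<delta> K g :: real and p r rho n C
  assumes eps: "0<\<epsilon>" "\<epsilon><1" and dl: "0<\<delta>" "\<delta><1/2" and Kp: "0<K"
  and set: "setting p r rho n"
  and hyp: "\<forall>C. C \<subseteq> {1..n} \<and> card C = r n \<longrightarrow>
               (\<forall>D. D \<subseteq> C \<and> D \<noteq> {} \<longrightarrow>
                  Ee p n D * hfun (rho n C - 1)
                    \<le> (1 - \<epsilon>) * (real (card D) * ln (real n / real (card D))))"
  and rK: "real (r n) \<le> K * real n powr (1/2-\<delta>)"
  and iii: "pbar p n C > 0 \<and> (1 / pbar p n C) * ln (real n / real (r n)) \<le> (\<epsilon>/2)^2/12 * real (r n)"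
  and ii: "\<forall>D. D \<subseteq> C \<and> real (card D) < real (r n) / (real n / real (r n)) powr g \<longrightarrow>
            real (card D) * pbar p n D / (real (card C) * pbar p n C) \<le> \<delta>"
  and lnln: "ln (ln (real n)) \<le> \<delta>*\<epsilon>/4 * ln (real n)"
  and lnK: "2 * ln K \<le> \<delta>*\<epsilon>/4 * ln (real n)"
  and n1: "1 \<le> ln (real n)"
  and C: "C \<subseteq> {1..n}" "card C = r n"
  shows "1 < rho n C \<and> rho n C - 1 < \<epsilon>/2 \<and> \<delta> * ln (real n) \<le> ln (real n / real (r n)) \<and>
         (\<forall>D\<in>ECset \<epsilon> p r rho n C. \<not> real (card D) < real (r n) / (real n / real (r n)) powr g)"
proof -
  have fin: "finite C" using C finite_subset by blast
  have rho1: "1 < rho n C" using set C unfolding setting_def by blast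
  have pb: "0 < pbar p n C" using iii by simp
  have r2: "2 \<le> r n" using card_ge2[OF pb] C by simp
  have EeC: "Ee p n C = pbar p n C * (real (r n) * (real (r n) - 1) / 2)"
    using EeC_eq[OF fin] C by simp
  have n0: "0 < real n" using n1 by (cases n) auto
  define l where "l = ln (real n)"
  define lr where "lr = ln (real (r n))"
  define L where "L = ln (real n / real (r n))"
  define t where "t = rho n C - 1"
  have r0: "0 < real (r n)" using r2 by simp
  have L_eq: "L = l - lr" unfolding L_def l_def lr_def using n0 r0 by (simp add: ln_div)
  have lr0: "0 \<le> lr" unfolding lr_def using r2 by simp
  have "lr \<le> ln (K * real n powr (1/2-\<delta>))" unfolding lr_def using r0 rK by simp
  also have "\<dots> = ln K + (1/2-\<delta>) * l" unfolding l_def using Kp n0 by (simp add: ln_mult ln_powr)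
  finally have lrK: "lr \<le> ln K + (1/2-\<delta>) * l" .
  have l1: "1 \<le> l" using n1 l_def by simp
  have "\<delta>*\<epsilon> \<le> \<delta>*1" using eps dl by (intro mult_left_mono) auto
  then have "\<delta>*\<epsilon>/4 \<le> 1" using dl by linarith
  then have "\<delta>*\<epsilon>/4 * l \<le> 1 * l" using l1 by (intro mult_right_mono) auto
  then have lK: "ln K \<le> l/2" using lnK l_def by simp
  have Lge: "\<delta> * l \<le> L" using L_eq lrK lK by (simp add: algebra_simps)
  have "0 < \<delta> * l" using dl l1 by simp
  then have Lpos: "0 < L" using Lge by linarith
  have Cne: "C \<noteq> {}" using r2 C by auto
  have hC: "Ee p n C * hfun t \<le> (1 - \<epsilon>) * (real (r n) * L)"
  proof -
    have "Ee p n C * hfun (rho n C - 1) \<le> (1 - \<epsilon>) * (real (card C) * ln (real n / real (card C)))"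
      using hyp C Cne by blast
    then show ?thesis unfolding t_def L_def using C by simp
  qed
  have h4: "hfun t \<le> 4 * ((\<epsilon>/2)^2/12)"
  proof (rule h_le_4c[OF pb _ _ _ eps Lpos[THEN less_imp_le]])
    show "2 \<le> real (r n)" using r2 by simp
    show "hfun t * (pbar p n C * (real (r n) * (real (r n) - 1) / 2)) \<le> (1 - \<epsilon>) * (real (r n) * L)"
      using hC EeC by (simp add: mult.commute)
    show "1 / pbar p n C * L \<le> (\<epsilon> / 2)\<^sup>2 / 12 * real (r n)" using iii L_def by simp
  qed
  have t0: "0 \<le> t" using rho1 t_def by simp
  have t2: "t^2 \<le> (2 + t) * hfun t" by (rule hfun_lower[OF t0])
  have tsm: "t < \<epsilon>/2"
    by (rule t_small[OF t0 t2]) (use h4 eps in \<open>simp_all add: power2_eq_square\<close>)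
  have D: "\<not> real (card D) < real (r n) / (real n / real (r n)) powr g" if DE: "D \<in> ECset \<epsilon> p r rho n C" for D
  proof
    assume small: "real (card D) < real (r n) / (real n / real (r n)) powr g"
    have DC: "D \<subseteq> C" and ineq: "(rho n C - 1)^2 * Ee p n D >
      (1 - \<epsilon>/2) * real (card D) * (ln (real n * real (card D) / (real (r n))^2) - bn r n)"
      using ECsetD[OF DE] by auto
    have Dne: "D \<noteq> {}" by (rule ECset_ne[OF DE])
    have fD: "finite D" using DC fin finite_subset by blast
    define dD where "dD = real (card D)"
    have dD1: "1 \<le> dD" unfolding dD_def using Dne fD by (simp add: Suc_le_eq card_gt_0_iff)
    have dDr: "dD \<le> real (r n)" unfolding dD_def using card_mono[OF fin DC] C by simp
    have "dD * pbar p n D / (real (r n) * pbar p n C) \<le> \<delta>" using ii DC small C dD_def by auto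
    then have iiD: "dD * pbar p n D \<le> \<delta> * real (r n) * pbar p n C"
      using r0 pb by (simp add: pos_divide_le_eq mult.assoc)
    have EeD: "Ee p n D = pbar p n D * (dD * (dD - 1) / 2)"
      using Ee_eq[OF fD] choose2_real dD_def by simp
    have EeD_le: "Ee p n D \<le> \<delta> * dD / real (r n) * Ee p n C"
      unfolding EeD EeC by (rule EeD_le[OF iiD dD1 dDr _ pb]) (use dl in simp)
    have EeC0: "0 \<le> Ee p n C" unfolding EeC using pb r2 by (intro mult_nonneg_nonneg) auto
    have "t^2 * Ee p n D \<le> t^2 * (\<delta> * dD / real (r n) * Ee p n C)"
      by (rule mult_left_mono[OF EeD_le]) simp
    also have "\<dots> = \<delta> * dD / real (r n) * (t^2 * Ee p n C)" by simp
    also have "\<dots> \<le> \<delta> * dD / real (r n) * ((2 + t) * (Ee p n C * hfun t))"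
    proof (rule mult_left_mono)
      show "t^2 * Ee p n C \<le> (2 + t) * (Ee p n C * hfun t)"
        using mult_right_mono[OF t2 EeC0] by (simp add: mult_ac)
      show "0 \<le> \<delta> * dD / real (r n)" using dl dD1 r0 by simp
    qed
    also have "\<dots> \<le> \<delta> * dD / real (r n) * ((2 + t) * ((1 - \<epsilon>) * (real (r n) * L)))"
      using hC t0 dl dD1 r0 by (intro mult_left_mono) auto
    also have "\<dots> = dD * ((2+t)*\<delta>*(1-\<epsilon>)*L)" using r0 by (simp add: field_simps)
    finally have up: "t^2 * Ee p n D \<le> dD * ((2+t)*\<delta>*(1-\<epsilon>)*L)" .
    have bn: "bn r n = ln L" unfolding bn_def L_def by simp
    have "ln (real n * dD / (real (r n))^2) = l + ln dD - 2 * lr"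
      unfolding l_def lr_def using n0 dD1 r0 by (simp add: ln_mult ln_div ln_realpow)
    moreover have "0 \<le> ln dD" using dD1 by simp
    ultimately have lg: "l - 2*lr - ln L \<le> ln (real n * dD / (real (r n))^2) - bn r n" using bn by simp
    have "dD * ((1 - \<epsilon>/2) * (l - 2*lr - ln L)) \<le> (1 - \<epsilon>/2) * dD * (ln (real n * dD / (real (r n))^2) - bn r n)"
      using mult_left_mono[OF lg, of "(1 - \<epsilon>/2) * dD"] eps dD1 by (simp add: mult_ac)
    also have "\<dots> < t^2 * Ee p n D" using ineq dD_def t_def by simp
    also have "\<dots> \<le> dD * ((2+t)*\<delta>*(1-\<epsilon>)*L)" by (rule up)
    finally have "(1 - \<epsilon>/2) * (l - 2*lr - ln L) < (2+t)*\<delta>*(1-\<epsilon>)*L"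
      using dD1 by (simp add: mult_less_cancel_left_pos)
    moreover have "ln L \<le> \<delta>*\<epsilon>/4*l"
    proof -
      have "L \<le> l" using L_eq lr0 by simp
      then have "ln L \<le> ln l" using Lpos by simp
      then show ?thesis using lnln l_def by simp
    qed
    ultimately show False
      using arith11[OF eps dl t0 _ lr0 L_eq lrK _ _ _ Lpos[THEN less_imp_le]] tsm lnK l_def l1 by force
  qed
  show ?thesis using rho1 tsm Lge D t_def l_def L_def by auto
qed




lemma rho_big:
  fixes \<rho> pb r L e :: real
  assumes "2 < ln \<rho>" "0<pb" "2 \<le> r" "hfun (\<rho>-1) * (pb*(r*(r-1)/2)) \<le> (1-e)*(r*L)" "0<e" "e<1" "0<L" "1<\<rho>"
  shows "ln \<rho> \<le> ln 8 + ln L - ln pb - ln r"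
proof -
  have hf: "hfun (\<rho>-1) = \<rho> * ln \<rho> - (\<rho> - 1)" unfolding hfun_def by simp
  have "\<rho> * 2 \<le> \<rho> * ln \<rho>" using assms by (intro mult_left_mono) auto
  then have h1: "\<rho> * ln \<rho> / 2 \<le> hfun (\<rho>-1)" using hf by simp
  have p1: "pb * r^2 / 4 \<le> pb*(r*(r-1)/2)"
  proof -
    have "r * (r / 2) \<le> r * (r - 1)" using assms by (intro mult_left_mono) auto
    then have "r * r / 2 \<le> r * (r - 1)" by simp
    then have "pb * (r * r / 2) \<le> pb * (r * (r - 1))" using assms by (intro mult_left_mono) auto
    then show ?thesis by (simp add: power2_eq_square)
  qed
  have "0 \<le> \<rho> * ln \<rho> / 2" using assms by simp
  then have h0: "0 \<le> hfun (\<rho>-1)" using h1 by linarith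
  have "(\<rho> * ln \<rho> / 2) * (pb * r^2 / 4) \<le> hfun (\<rho>-1) * (pb*(r*(r-1)/2))"
    using h1 p1 \<open>0 \<le> \<rho> * ln \<rho> / 2\<close> h0 assms(2) by (intro mult_mono) simp_all
  also have "\<dots> \<le> r * L"
  proof -
    have "0 \<le> e * (r * L)" using assms by simp
    then have "(1-e) * (r * L) \<le> r * L" by (simp add: algebra_simps)
    then show ?thesis using assms(4) by linarith
  qed
  finally have "(\<rho> * ln \<rho>) * (pb * r) * r \<le> (8 * L) * r" by (simp add: power2_eq_square algebra_simps)
  then have A: "(\<rho> * ln \<rho>) * (pb * r) \<le> 8 * L" using assms by (simp add: mult_le_cancel_right)
  have "\<rho> * (pb * r) \<le> (\<rho> * ln \<rho>) * (pb * r)" using assms by (intro mult_right_mono) auto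
  with A have "\<rho> * (pb * r) \<le> 8 * L" by linarith
  then have "\<rho> \<le> 8 * L / (pb * r)" using assms by (simp add: pos_le_divide_eq)
  then have "ln \<rho> \<le> ln (8 * L / (pb * r))" using assms by simp
  also have "\<dots> = ln 8 + ln L - ln pb - ln r" using assms by (simp add: ln_div ln_mult)
  finally show ?thesis .
qed

lemma key12:
  fixes \<epsilon> a :: real and p r rho n C
  assumes eps: "0<\<epsilon>" "\<epsilon><1" and a: "0 < a" "a \<le> 1/2"
  and set: "setting p r rho n"
  and hyp: "\<forall>C. C \<subseteq> {1..n} \<and> card C = r n \<longrightarrow>
               (\<forall>D. D \<subseteq> C \<and> D \<noteq> {} \<longrightarrow>
                  Ee p n D * hfun (rho n C - 1)
                    \<le> (1 - \<epsilon>) * (real (card D) * ln (real n / real (card D))))"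
  and ra: "real (r n) \<le> real n powr a"
  and pb: "pbar p n C > 0"
  and n1: "1 \<le> ln (real n)"
  and C: "C \<subseteq> {1..n}" "card C = r n"
  shows "1 < rho n C \<and> ln (real n) / 2 \<le> ln (real n / real (r n)) \<and>
     ln 2 \<le> ln (real (r n)) \<and> ln (real (r n)) \<le> a * ln (real n) \<and>
     (ln (rho n C) \<le> 2 \<or> ln (rho n C) \<le> ln 8 + ln (ln (real n / real (r n))) - ln (pbar p n C) - ln (real (r n)))"
proof -
  have fin: "finite C" using C finite_subset by blast
  have rho1: "1 < rho n C" using set C unfolding setting_def by blast
  have r2: "2 \<le> r n" using card_ge2[OF pb] C by simp
  have EeC: "Ee p n C = pbar p n C * (real (r n) * (real (r n) - 1) / 2)"
    using EeC_eq[OF fin] C by simp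
  have n0: "0 < real n" using n1 by (cases n) auto
  define l where "l = ln (real n)"
  define lr where "lr = ln (real (r n))"
  define L where "L = ln (real n / real (r n))"
  have r0: "0 < real (r n)" using r2 by simp
  have L_eq: "L = l - lr" unfolding L_def l_def lr_def using n0 r0 by (simp add: ln_div)
  have lr2: "ln 2 \<le> lr" unfolding lr_def using r2 by simp
  have "0 < real n powr a" using n0 by simp
  then have "lr \<le> ln (real n powr a)" unfolding lr_def using ln_le_cancel_iff[OF r0] ra by blast
  also have "\<dots> = a * l" unfolding l_def using n0 by (simp add: ln_powr)
  finally have lra: "lr \<le> a * l" .
  have l1: "1 \<le> l" using n1 l_def by simp
  have "a * l \<le> 1/2 * l" using a l1 by (intro mult_right_mono) auto
  then have Lge: "l/2 \<le> L" using L_eq lra by simp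
  have Lpos: "0 < L" using Lge l1 by simp
  have Cne: "C \<noteq> {}" using r2 C by auto
  have hC: "hfun (rho n C - 1) * (pbar p n C * (real (r n) * (real (r n) - 1) / 2)) \<le> (1 - \<epsilon>) * (real (r n) * L)"
  proof -
    have "Ee p n C * hfun (rho n C - 1) \<le> (1 - \<epsilon>) * (real (card C) * ln (real n / real (card C)))"
      using hyp C Cne by blast
    then show ?thesis unfolding L_def using C EeC by (simp add: mult.commute)
  qed
  have "ln (rho n C) \<le> 2 \<or> ln (rho n C) \<le> ln 8 + ln L - ln (pbar p n C) - lr"
  proof (cases "ln (rho n C) \<le> 2")
    case False
    then show ?thesis unfolding lr_def
      using rho_big[OF _ pb _ hC eps Lpos rho1] r2 by simp
  qed simp
  then show ?thesis using rho1 Lge lr2 lra l_def lr_def L_def by auto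
qed




lemma ev_ln_ge: "eventually (\<lambda>n::nat. B \<le> ln (real n)) sequentially"
proof -
  have "filterlim (\<lambda>n::nat. ln (real n)) at_top sequentially" by real_asymp
  then show ?thesis by (simp add: filterlim_at_top)
qed

lemma ev_lnln: assumes "0 < (a::real)" shows "eventually (\<lambda>n::nat. ln (ln (real n)) \<le> a * ln (real n)) sequentially"
proof -
  have "((\<lambda>n::nat. ln (ln (real n)) / ln (real n)) \<longlongrightarrow> 0) sequentially" by real_asymp
  then have "eventually (\<lambda>n::nat. ln (ln (real n)) / ln (real n) < a) sequentially"
    using assms by (rule order_tendstoD)
  then show ?thesis using ev_ln_ge[of 1]
    by eventually_elim (simp add: pos_divide_less_eq)
qed

lemma ev_real1: assumes "0 < (a::real)" shows "\<exists>Y. \<forall>y\<ge>Y. (ln (8*y))^2 / y \<le> a"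
proof -
  have "((\<lambda>y::real. (ln (8*y))^2 / y) \<longlongrightarrow> 0) at_top" by real_asymp
  then have "eventually (\<lambda>y::real. (ln (8*y))^2 / y < a) at_top"
    using assms by (rule order_tendstoD)
  then show ?thesis unfolding eventually_at_top_linorder by (meson less_imp_le)
qed

lemma ev_real2: assumes "0 < (a::real)" shows "\<exists>Y. \<forall>y\<ge>Y. ln (8*y) / y \<le> a"
proof -
  have "((\<lambda>y::real. ln (8*y) / y) \<longlongrightarrow> 0) at_top" by real_asymp
  then have "eventually (\<lambda>y::real. ln (8*y) / y < a) at_top"
    using assms by (rule order_tendstoD)
  then show ?thesis unfolding eventually_at_top_linorder by (meson less_imp_le)
qed

lemma fin11a:
  fixes r dD N g L \<rho> \<eta> :: real
  assumes "0 < r" "1 \<le> dD" "dD \<le> r" "r / N powr g \<le> dD" "0 < N" "L = ln N" "0 < L" "1 < \<rho>" "\<rho> - 1 < 1" "g \<le> \<eta>"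
  shows "\<bar>ln (r/dD) / L * max (ln \<rho>) 1\<bar> \<le> \<eta>"
proof -
  have "ln \<rho> \<le> \<rho> - 1" using assms by (intro ln_le_minus_one) auto
  then have m: "max (ln \<rho>) 1 = 1" using assms by simp
  have x0: "0 \<le> ln (r/dD)" using assms by simp
  have "r \<le> dD * N powr g" using assms by (simp add: divide_le_eq)
  then have "r / dD \<le> N powr g" using assms by (simp add: divide_le_eq mult.commute)
  moreover have "0 < r/dD" using assms by simp
  ultimately have "ln (r/dD) \<le> ln (N powr g)" by (subst ln_le_cancel_iff) auto
  also have "\<dots> = g * L" using assms by (simp add: ln_powr)
  finally have "ln (r/dD) / L \<le> g" using assms by (simp add: divide_le_eq)
  then show ?thesis using m x0 assms by simp
qed

lemma fin11b:
  fixes L M \<rho> :: real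
  assumes "0 \<le> L" "M \<le> L" "1 < \<rho>" "ln \<rho> \<le> 1"
  shows "M \<le> L / ln \<rho>"
proof -
  have "0 < ln \<rho>" using assms by simp
  have "L * ln \<rho> \<le> L * 1" using assms by (intro mult_left_mono) auto
  then have "L \<le> L / ln \<rho>" using \<open>0 < ln \<rho>\<close> by (simp add: le_divide_eq)
  then show ?thesis using assms by simp
qed

lemma fin12a:
  fixes x lr L lrho lp c \<eta> a l :: real
  assumes "0 \<le> x" "x \<le> lr" "lr \<le> a*l" "l/2 \<le> L" "0<L" "0 < lrho" "0 \<le> lr"
    "lrho \<le> 2 \<or> lrho \<le> ln 8 + ln L - lp - lr" "-lp*lr \<le> c*L"
    "(ln (8*L))^2/4 \<le> \<eta>/2 * L" "c \<le> \<eta>/2" "4*a \<le> \<eta>" "0 < a"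
  shows "\<bar>x / L * max lrho 1\<bar> \<le> \<eta>"
proof -
  have m0: "0 \<le> max lrho 1" by simp
  have key: "x * max lrho 1 \<le> \<eta> * L"
  proof (cases "lrho \<le> 2")
    case True
    then have "max lrho 1 \<le> 2" by simp
    then have "x * max lrho 1 \<le> lr * 2" using assms by (intro mult_mono) auto
    also have "\<dots> \<le> 2 * a * l" using assms by simp
    also have "\<dots> \<le> 2 * a * (2 * L)" using assms by (intro mult_left_mono) auto
    also have "\<dots> = 4 * a * L" by simp
    also have "\<dots> \<le> \<eta> * L" using assms by (intro mult_right_mono) auto
    finally show ?thesis .
  next
    case False
    then have m: "max lrho 1 = lrho" by simp
    have r: "lrho \<le> ln 8 + ln L - lp - lr" using False assms by simp
    have "x * lrho \<le> lr * lrho" using assms by (intro mult_right_mono) auto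
    also have "\<dots> \<le> (ln (8*L))^2/4 + c * L" by (rule arith12a[OF r assms(9) assms(7) assms(5)])
    also have "\<dots> \<le> \<eta>/2 * L + \<eta>/2 * L" using assms by (intro add_mono mult_right_mono) auto
    finally show ?thesis using m by (simp add: mult.commute)
  qed
  have "0 \<le> x / L * max lrho 1" using assms by simp
  moreover have "x / L * max lrho 1 = (x * max lrho 1) / L" by simp
  ultimately show ?thesis using key assms by (simp add: divide_le_eq)
qed

lemma fin12b:
  fixes lrho L lp lr M :: real
  assumes "0<lrho" "0 < M" "2*M \<le> L" "lrho \<le> 2 \<or> lrho \<le> ln 8 + ln L - lp - lr" "ln 2 \<le> lr"
    "-lp*lr \<le> (ln 2/(2*M))*L" "ln(8*L) \<le> L/(2*M)"
  shows "M \<le> L / lrho"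
proof -
  have L0: "0 < L" using assms by simp
  have "M * lrho \<le> L"
  proof (cases "lrho \<le> 2")
    case True
    then have "M * lrho \<le> M * 2" using assms by (intro mult_left_mono) auto
    then show ?thesis using assms by linarith
  next
    case False
    then have r: "lrho \<le> ln (8*L) - lp - lr" using assms L0 by (simp add: ln_mult)
    have lr0: "0 \<le> lr" using assms(5) ln_gt_zero[of "2::real"] by linarith
    have "-lp \<le> L/(2*M)"
    proof (cases "-lp \<le> 0")
      case True
      have "0 \<le> L/(2*M)" using L0 assms by simp
      then show ?thesis using True by linarith
    next
      case False
      then have "-lp * ln 2 \<le> -lp * lr" using assms by (intro mult_left_mono) auto
      also have "\<dots> \<le> (ln 2/(2*M))*L" using assms by simp
      finally have "-lp * ln 2 \<le> (L/(2*M)) * ln 2" by (simp add: mult.commute)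
      moreover have "(0::real) < ln 2" by simp
      ultimately show ?thesis using mult_right_le_imp_le[of "-lp" "ln 2" "L/(2*M)"] by blast
    qed
    then have "lrho \<le> L/(2*M) + L/(2*M)" using r lr0 assms(7) by linarith
    also have "\<dots> = L/M" by simp
    finally have "lrho \<le> L/M" .
    then show ?thesis using assms by (simp add: field_simps)
  qed
  then show ?thesis using assms by (simp add: le_divide_eq)
qed




lemma ECset_card:
  assumes DE: "D \<in> ECset \<epsilon> p r rho n C" and C: "C \<subseteq> {1..n}" "card C = r n"
  shows "1 \<le> real (card D)" "real (card D) \<le> real (r n)" "D \<subseteq> C"
proof -
  have DC: "D \<subseteq> C" using ECsetD[OF DE] by simp
  have fin: "finite C" using C finite_subset by blast
  have fD: "finite D" using DC fin finite_subset by blast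
  have "D \<noteq> {}" by (rule ECset_ne[OF DE])
  then show "1 \<le> real (card D)" using fD by (simp add: Suc_le_eq card_gt_0_iff)
  show "real (card D) \<le> real (r n)" using card_mono[OF fin DC] C by simp
  show "D \<subseteq> C" by (rule DC)
qed

lemma case11:
  fixes \<epsilon> :: real
    and p :: "nat \<Rightarrow> nat \<Rightarrow> nat \<Rightarrow> real"
    and r :: "nat \<Rightarrow> nat"
    and rho :: "nat \<Rightarrow> nat set \<Rightarrow> real"
  assumes eps: "0 < \<epsilon>" "\<epsilon> < 1"
    and set: "\<forall>n. setting p r rho n"
    and A: "assumption11 p r"
    and hyp: "\<forall>n. \<forall>C. C \<subseteq> {1..n} \<and> card C = r n \<longrightarrow>
               (\<forall>D. D \<subseteq> C \<and> D \<noteq> {} \<longrightarrow>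
                  Ee p n D * hfun (rho n C - 1)
                    \<le> (1 - \<epsilon>) * (real (card D) * ln (real n / real (card D))))"
  shows "(\<forall>\<eta>>0. eventually (\<lambda>n. \<forall>C. C \<subseteq> {1..n} \<and> card C = r n \<longrightarrow>
             (\<forall>D\<in>ECset \<epsilon> p r rho n C.
                \<bar>ln (real (r n) / real (card D)) / ln (real n / real (r n))
                   * max (ln (rho n C)) 1\<bar> \<le> \<eta>)) sequentially)
       \<and> (\<forall>M. eventually (\<lambda>n. \<forall>C. C \<subseteq> {1..n} \<and> card C = r n \<longrightarrow>
             ln (real n / real (r n)) / ln (rho n C) \<ge> M) sequentially)"
proof -
  from A obtain \<delta> \<gamma> where dl: "0<\<delta>" "\<delta><1/2"
    and bigo: "(\<lambda>n. real (r n)) \<in> O(\<lambda>n. real n powr (1/2 - \<delta>))"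
    and glim: "\<gamma> \<longlonglongrightarrow> 0"
    and ii: "\<forall>n. \<forall>C D. C \<subseteq> {1..n} \<and> card C = r n \<and> D \<subseteq> C \<and>
            real (card D) < real (r n) / (real n / real (r n)) powr (\<gamma> n) \<longrightarrow>
            real (card D) * pbar p n D / (real (card C) * pbar p n C) \<le> \<delta>"
    and iii: "\<forall>c>0. eventually (\<lambda>n. \<forall>C. C \<subseteq> {1..n} \<and> card C = r n \<longrightarrow>
          pbar p n C > 0 \<and>
          (1 / pbar p n C) * ln (real n / real (r n)) \<le> c * real (r n)) sequentially"
    unfolding assumption11_def by blast
  from bigo obtain K where Kp: "K > 0"
    and evK0: "eventually (\<lambda>n. norm (real (r n)) \<le> K * norm (real n powr (1/2-\<delta>))) sequentially"
    by (rule landau_o.bigE)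
  have evK: "eventually (\<lambda>n. real (r n) \<le> K * real n powr (1/2-\<delta>)) sequentially"
    using evK0 by eventually_elim simp
  have c0: "0 < (\<epsilon>/2)^2/12" using eps by simp
  have ev3: "eventually (\<lambda>n. \<forall>C. C \<subseteq> {1..n} \<and> card C = r n \<longrightarrow>
          pbar p n C > 0 \<and> (1 / pbar p n C) * ln (real n / real (r n)) \<le> (\<epsilon>/2)^2/12 * real (r n)) sequentially"
    using iii c0 by blast
  have a0: "0 < \<delta>*\<epsilon>/4" using dl eps by simp
  have evl: "eventually (\<lambda>n. ln (ln (real n)) \<le> \<delta>*\<epsilon>/4 * ln (real n)) sequentially"
    by (rule ev_lnln[OF a0])
  have evk2: "eventually (\<lambda>n. 2 * ln K \<le> \<delta>*\<epsilon>/4 * ln (real n)) sequentially"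
    using ev_ln_ge[of "2 * ln K / (\<delta>*\<epsilon>/4)"]
    by eventually_elim (use a0 in \<open>simp add: pos_divide_le_eq mult.commute\<close>)
  have ev1: "eventually (\<lambda>n. 1 \<le> ln (real n)) sequentially" by (rule ev_ln_ge)
  have EV: "eventually (\<lambda>n. 1 \<le> ln (real n) \<and> (\<forall>C. C \<subseteq> {1..n} \<and> card C = r n \<longrightarrow>
      1 < rho n C \<and> rho n C - 1 < \<epsilon>/2 \<and> \<delta> * ln (real n) \<le> ln (real n / real (r n)) \<and>
         (\<forall>D\<in>ECset \<epsilon> p r rho n C. \<not> real (card D) < real (r n) / (real n / real (r n)) powr \<gamma> n))) sequentially"
    using evK ev3 evl evk2 ev1
  proof eventually_elim
    case (elim n)
    have "\<forall>C. C \<subseteq> {1..n} \<and> card C = r n \<longrightarrow>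
      1 < rho n C \<and> rho n C - 1 < \<epsilon>/2 \<and> \<delta> * ln (real n) \<le> ln (real n / real (r n)) \<and>
         (\<forall>D\<in>ECset \<epsilon> p r rho n C. \<not> real (card D) < real (r n) / (real n / real (r n)) powr \<gamma> n)"
    proof (intro allI impI)
      fix C assume C: "C \<subseteq> {1..n} \<and> card C = r n"
      have iiC: "\<forall>D. D \<subseteq> C \<and> real (card D) < real (r n) / (real n / real (r n)) powr (\<gamma> n) \<longrightarrow>
            real (card D) * pbar p n D / (real (card C) * pbar p n C) \<le> \<delta>" using ii C by blast
      show "1 < rho n C \<and> rho n C - 1 < \<epsilon>/2 \<and> \<delta> * ln (real n) \<le> ln (real n / real (r n)) \<and>
         (\<forall>D\<in>ECset \<epsilon> p r rho n C. \<not> real (card D) < real (r n) / (real n / real (r n)) powr \<gamma> n)"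
        by (rule key11[OF eps dl Kp spec[OF set, of n] spec[OF hyp, of n] elim(1)
              elim(2)[rule_format, OF C] iiC elim(3) elim(4) elim(5) conjunct1[OF C] conjunct2[OF C]])
    qed
    with elim(5) show ?case by blast
  qed
  have PA: "\<forall>\<eta>>0. eventually (\<lambda>n. \<forall>C. C \<subseteq> {1..n} \<and> card C = r n \<longrightarrow>
             (\<forall>D\<in>ECset \<epsilon> p r rho n C.
                \<bar>ln (real (r n) / real (card D)) / ln (real n / real (r n))
                   * max (ln (rho n C)) 1\<bar> \<le> \<eta>)) sequentially"
  proof (intro allI impI)
    fix \<eta> :: real assume \<eta>: "0 < \<eta>"
    have evg: "eventually (\<lambda>n. \<gamma> n < \<eta>) sequentially" using glim \<eta> by (rule order_tendstoD)
    show "eventually (\<lambda>n. \<forall>C. C \<subseteq> {1..n} \<and> card C = r n \<longrightarrow>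
             (\<forall>D\<in>ECset \<epsilon> p r rho n C.
                \<bar>ln (real (r n) / real (card D)) / ln (real n / real (r n))
                   * max (ln (rho n C)) 1\<bar> \<le> \<eta>)) sequentially"
      using EV evg
    proof eventually_elim
      case (elim n)
      show ?case
      proof (intro allI impI ballI)
        fix C D assume C: "C \<subseteq> {1..n} \<and> card C = r n" and DE: "D \<in> ECset \<epsilon> p r rho n C"
        have P: "1 < rho n C" "rho n C - 1 < \<epsilon>/2" "\<delta> * ln (real n) \<le> ln (real n / real (r n))"
          "\<not> real (card D) < real (r n) / (real n / real (r n)) powr \<gamma> n"
          using elim(1) C DE by auto
        have d1: "1 \<le> real (card D)" and dr: "real (card D) \<le> real (r n)"
          using ECset_card[OF DE] C by auto
        have r0: "0 < real (r n)" using d1 dr by simp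
        have n0: "0 < real n" using elim(1) by (cases n) auto
        have "0 < \<delta> * ln (real n)" using dl elim(1) by simp
        then have L0: "0 < ln (real n / real (r n))" using P(3) by linarith
        show "\<bar>ln (real (r n) / real (card D)) / ln (real n / real (r n)) * max (ln (rho n C)) 1\<bar> \<le> \<eta>"
          by (rule fin11a[where g="\<gamma> n", OF r0 d1 dr _ _ refl L0 P(1)])
             (use P(2,4) eps n0 r0 elim(2) in auto)
      qed
    qed
  qed
  have PB: "\<forall>M. eventually (\<lambda>n. \<forall>C. C \<subseteq> {1..n} \<and> card C = r n \<longrightarrow>
             ln (real n / real (r n)) / ln (rho n C) \<ge> M) sequentially"
  proof
    fix M :: real
    have evM: "eventually (\<lambda>n. M / \<delta> \<le> ln (real n)) sequentially" by (rule ev_ln_ge)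
    show "eventually (\<lambda>n. \<forall>C. C \<subseteq> {1..n} \<and> card C = r n \<longrightarrow>
             ln (real n / real (r n)) / ln (rho n C) \<ge> M) sequentially"
      using EV evM
    proof eventually_elim
      case (elim n)
      show ?case
      proof (intro allI impI)
        fix C assume C: "C \<subseteq> {1..n} \<and> card C = r n"
        have P: "1 < rho n C" "rho n C - 1 < \<epsilon>/2" "\<delta> * ln (real n) \<le> ln (real n / real (r n))"
          using elim(1) C by auto
        have "ln (rho n C) \<le> rho n C - 1" using P(1) by (intro ln_le_minus_one) auto
        then have l1: "ln (rho n C) \<le> 1" using P(2) eps by simp
        have m1: "M \<le> \<delta> * ln (real n)" using elim(2) dl by (simp add: pos_divide_le_eq mult.commute)
        have m2: "0 \<le> \<delta> * ln (real n)" using dl elim(1) by simp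
        have "0 \<le> ln (real n / real (r n))" "M \<le> ln (real n / real (r n))" using m1 m2 P(3) by linarith+
        then show "M \<le> ln (real n / real (r n)) / ln (rho n C)"
          by (rule fin11b[OF _ _ P(1) l1])
      qed
    qed
  qed
  show ?thesis using PA PB by blast
qed


lemma case12:
  fixes \<epsilon> :: real
    and p :: "nat \<Rightarrow> nat \<Rightarrow> nat \<Rightarrow> real"
    and r :: "nat \<Rightarrow> nat"
    and rho :: "nat \<Rightarrow> nat set \<Rightarrow> real"
  assumes eps: "0 < \<epsilon>" "\<epsilon> < 1"
    and set: "\<forall>n. setting p r rho n"
    and A: "assumption12 p r"
    and hyp: "\<forall>n. \<forall>C. C \<subseteq> {1..n} \<and> card C = r n \<longrightarrow>
               (\<forall>D. D \<subseteq> C \<and> D \<noteq> {} \<longrightarrow>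
                  Ee p n D * hfun (rho n C - 1)
                    \<le> (1 - \<epsilon>) * (real (card D) * ln (real n / real (card D))))"
  shows "(\<forall>\<eta>>0. eventually (\<lambda>n. \<forall>C. C \<subseteq> {1..n} \<and> card C = r n \<longrightarrow>
             (\<forall>D\<in>ECset \<epsilon> p r rho n C.
                \<bar>ln (real (r n) / real (card D)) / ln (real n / real (r n))
                   * max (ln (rho n C)) 1\<bar> \<le> \<eta>)) sequentially)
       \<and> (\<forall>M. eventually (\<lambda>n. \<forall>C. C \<subseteq> {1..n} \<and> card C = r n \<longrightarrow>
             ln (real n / real (r n)) / ln (rho n C) \<ge> M) sequentially)"
proof -
  have i12: "\<forall>c>0. eventually (\<lambda>n. real (r n) \<le> real n powr c) sequentially"
    and ii12: "\<forall>c>0. eventually (\<lambda>n. \<forall>C. C \<subseteq> {1..n} \<and> card C = r n \<longrightarrow>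
          pbar p n C > 0 \<and>
          ln (1 / pbar p n C) * ln (real (r n)) \<le> c * ln (real n / real (r n))) sequentially"
    using A unfolding assumption12_def by blast+
  have lnp: "ln (1 / x) = - ln x" if "0 < x" for x :: real using that by (simp add: ln_div)
  have PA: "\<forall>\<eta>>0. eventually (\<lambda>n. \<forall>C. C \<subseteq> {1..n} \<and> card C = r n \<longrightarrow>
             (\<forall>D\<in>ECset \<epsilon> p r rho n C.
                \<bar>ln (real (r n) / real (card D)) / ln (real n / real (r n))
                   * max (ln (rho n C)) 1\<bar> \<le> \<eta>)) sequentially"
  proof (intro allI impI)
    fix \<eta> :: real assume \<eta>: "0 < \<eta>"
    define a where "a = min (1/2) (\<eta>/4)"
    have a: "0 < a" "a \<le> 1/2" "4*a \<le> \<eta>" using \<eta> unfolding a_def by auto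
    have "0 < 2*\<eta>" using \<eta> by simp
    from ev_real1[OF this] obtain Y where Y: "\<And>y. y \<ge> Y \<Longrightarrow> (ln (8*y))^2 / y \<le> 2*\<eta>" by blast
    have c: "0 < \<eta>/2" using \<eta> by simp
    show "eventually (\<lambda>n. \<forall>C. C \<subseteq> {1..n} \<and> card C = r n \<longrightarrow>
             (\<forall>D\<in>ECset \<epsilon> p r rho n C.
                \<bar>ln (real (r n) / real (card D)) / ln (real n / real (r n))
                   * max (ln (rho n C)) 1\<bar> \<le> \<eta>)) sequentially"
      using i12[rule_format, OF a(1)] ii12[rule_format, OF c] ev_ln_ge[of "max 1 (2*Y)"]
    proof eventually_elim
      case (elim n)
      show ?case
      proof (intro allI impI ballI)
        fix C D assume C: "C \<subseteq> {1..n} \<and> card C = r n" and DE: "D \<in> ECset \<epsilon> p r rho n C"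
        have pb: "0 < pbar p n C" and pc: "ln (1 / pbar p n C) * ln (real (r n)) \<le> \<eta>/2 * ln (real n / real (r n))"
          using elim(2) C by auto
        have n1: "1 \<le> ln (real n)" using elim(3) by simp
        have K: "1 < rho n C \<and> ln (real n) / 2 \<le> ln (real n / real (r n)) \<and>
           ln 2 \<le> ln (real (r n)) \<and> ln (real (r n)) \<le> a * ln (real n) \<and>
           (ln (rho n C) \<le> 2 \<or> ln (rho n C) \<le> ln 8 + ln (ln (real n / real (r n))) - ln (pbar p n C) - ln (real (r n)))"
          by (rule key12[OF eps a(1,2) spec[OF set, of n] spec[OF hyp, of n] elim(1) pb n1 conjunct1[OF C] conjunct2[OF C]])
        define L where "L = ln (real n / real (r n))"
        have d1: "1 \<le> real (card D)" and dr: "real (card D) \<le> real (r n)"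
          using ECset_card[OF DE] C by auto
        have r0: "0 < real (r n)" using d1 dr by simp
        have x_eq: "ln (real (r n) / real (card D)) = ln (real (r n)) - ln (real (card D))"
          using r0 d1 by (simp add: ln_div)
        have x0: "0 \<le> ln (real (r n) / real (card D))" using r0 d1 dr by simp
        have xr: "ln (real (r n) / real (card D)) \<le> ln (real (r n))" using x_eq d1 by simp
        have LY: "Y \<le> L" using K elim(3) L_def by simp
        have L0: "0 < L" using K n1 L_def by simp
        have "(ln (8*L))^2 / L \<le> 2*\<eta>" by (rule Y[OF LY])
        then have LL: "(ln (8*L))^2/4 \<le> \<eta>/2 * L" using L0 by (simp add: divide_le_eq)
        have lr0: "0 \<le> ln (real (r n))" using r0 d1 dr by simp
        have lrho: "0 < ln (rho n C)" using K by simp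
        have pc': "- ln (pbar p n C) * ln (real (r n)) \<le> \<eta>/2 * L" using pc lnp[OF pb] L_def by simp
        show "\<bar>ln (real (r n) / real (card D)) / ln (real n / real (r n)) * max (ln (rho n C)) 1\<bar> \<le> \<eta>"
          unfolding L_def[symmetric]
          by (rule fin12a[OF x0 xr _ _ L0 lrho lr0 _ pc' LL _ a(3) a(1)]) (use K L_def in auto)
      qed
    qed
  qed
  have PB: "\<forall>M. eventually (\<lambda>n. \<forall>C. C \<subseteq> {1..n} \<and> card C = r n \<longrightarrow>
             ln (real n / real (r n)) / ln (rho n C) \<ge> M) sequentially"
  proof
    fix M :: real
    define M' where "M' = max M 1"
    have M': "0 < M'" "M \<le> M'" unfolding M'_def by auto
    have "0 < 1/(2*M')" using M' by simp
    from ev_real2[OF this] obtain Y where Y: "\<And>y. y \<ge> Y \<Longrightarrow> ln (8*y) / y \<le> 1/(2*M')" by blast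
    have c: "0 < ln 2/(2*M')" using M' by simp
    have a: "(0::real) < 1/2" "(1::real)/2 \<le> 1/2" by auto
    show "eventually (\<lambda>n. \<forall>C. C \<subseteq> {1..n} \<and> card C = r n \<longrightarrow>
             ln (real n / real (r n)) / ln (rho n C) \<ge> M) sequentially"
      using i12[rule_format, OF a(1)] ii12[rule_format, OF c] ev_ln_ge[of "max 1 (max (2*Y) (4*M'))"]
    proof eventually_elim
      case (elim n)
      show ?case
      proof (intro allI impI)
        fix C assume C: "C \<subseteq> {1..n} \<and> card C = r n"
        have pb: "0 < pbar p n C" and pc: "ln (1 / pbar p n C) * ln (real (r n)) \<le> ln 2/(2*M') * ln (real n / real (r n))"
          using elim(2) C by auto
        have n1: "1 \<le> ln (real n)" using elim(3) by simp
        have K: "1 < rho n C \<and> ln (real n) / 2 \<le> ln (real n / real (r n)) \<and>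
           ln 2 \<le> ln (real (r n)) \<and> ln (real (r n)) \<le> 1/2 * ln (real n) \<and>
           (ln (rho n C) \<le> 2 \<or> ln (rho n C) \<le> ln 8 + ln (ln (real n / real (r n))) - ln (pbar p n C) - ln (real (r n)))"
          by (rule key12[OF eps a spec[OF set, of n] spec[OF hyp, of n] elim(1) pb n1 conjunct1[OF C] conjunct2[OF C]])
        define L where "L = ln (real n / real (r n))"
        have LY: "Y \<le> L" and LM: "2*M' \<le> L" using K elim(3) L_def by auto
        have L0: "0 < L" using K n1 L_def by simp
        have "ln (8*L) / L \<le> 1/(2*M')" by (rule Y[OF LY])
        then have LL: "ln (8*L) \<le> L/(2*M')" using L0 M' by (simp add: divide_le_eq field_simps)
        have lrho: "0 < ln (rho n C)" using K by simp
        have pc': "- ln (pbar p n C) * ln (real (r n)) \<le> ln 2/(2*M') * L" using pc lnp[OF pb] L_def by simp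
        have "M' \<le> L / ln (rho n C)"
          by (rule fin12b[OF lrho M'(1) LM _ _ pc' LL]) (use K L_def in auto)
        then show "M \<le> ln (real n / real (r n)) / ln (rho n C)" using M' L_def by simp
      qed
    qed
  qed
  show ?thesis using PA PB by blast
qed


theorem lemma6:
  fixes \<epsilon> :: real
    and p :: "nat \<Rightarrow> nat \<Rightarrow> nat \<Rightarrow> real"
    and r :: "nat \<Rightarrow> nat"
    and rho :: "nat \<Rightarrow> nat set \<Rightarrow> real"
  assumes eps: "0 < \<epsilon>" "\<epsilon> < 1"
    and set: "\<forall>n. setting p r rho n"
    and A2: "assumption2 p r rho"
    and A1: "assumption11 p r \<or> assumption12 p r"
    and hyp: "\<forall>n. \<forall>C. C \<subseteq> {1..n} \<and> card C = r n \<longrightarrow>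
               (\<forall>D. D \<subseteq> C \<and> D \<noteq> {} \<longrightarrow>
                  Ee p n D * hfun (rho n C - 1)
                    \<le> (1 - \<epsilon>) * (real (card D) * ln (real n / real (card D))))"
  shows "(\<forall>\<eta>>0. eventually (\<lambda>n. \<forall>C. C \<subseteq> {1..n} \<and> card C = r n \<longrightarrow>
             (\<forall>D\<in>ECset \<epsilon> p r rho n C.
                \<bar>ln (real (r n) / real (card D)) / ln (real n / real (r n))
                   * max (ln (rho n C)) 1\<bar> \<le> \<eta>)) sequentially)
       \<and> (\<forall>M. eventually (\<lambda>n. \<forall>C. C \<subseteq> {1..n} \<and> card C = r n \<longrightarrow>
             ln (real n / real (r n)) / ln (rho n C) \<ge> M) sequentially)"
proof (cases "assumption11 p r")
  case True
  show ?thesis by (rule case11[OF eps set True hyp])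
next
  case False
  then have A12: "assumption12 p r" using A1 by blast
  show ?thesis by (rule case12[OF eps set A12 hyp])
qed

end
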